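(* Let $\nu\geq 1$ and $n_d>1$ be integers and let $\boldsymbol{\eta}^1,\ldots,\boldsymbol{\eta}^{n_d}\in\mathbb{R}^\nu$ satisfy $\frac{1}{n_d}\sum_{j=1}^{n_d}\boldsymbol{\eta}^j=\mathbf{0}_\nu$ and $\frac{1}{n_d-1}\sum_{j=1}^{n_d}\boldsymbol{\eta}^j\otimes\boldsymbol{\eta}^j=[I_\nu]$. Set $s=\left(\frac{4}{n_d(2+\nu)}\right)^{1/(\nu+4)}$, $\hat s=s/\sqrt{s^2+(n_d-1)/n_d}$, and $$p_{\mathbf{H}}(\mathbf{y})=\frac{1}{n_d}\sum_{j=1}^{n_d}\frac{1}{(\sqrt{2\pi}\,\hat s)^\nu}\exp\Big(-\frac{1}{2\hat s^2}\Big\|\mathbf{y}-\frac{\hat s}{s}\boldsymbol{\eta}^j\Big\|^2\Big),\quad \mathbf{y}\in\mathbb{R}^\nu .$$ Let $f=\log p_{\mathbf{H}}$, $\mathbf{g}=(g_1,\ldots,g_\nu)=\nabla f$ (so $g_j=\partial f/\partial y_j$), $\hat g=\|\mathbf{g}\|$, and $h=\nabla^2 f=\sum_{j=1}^\nu\partial^2 f/\partial y_j^2$. Let $\mathbf{Y}$ be an $\mathbb{R}^\nu$-valued normalized Gaussian random vector (density $p_{\mathbf{Y}}(\mathbf{y})=(2\pi)^{-\nu/2}e^{-\|\mathbf{y}\|^2/2}$) and $\mathbb{H}=L^2(\mathbb{R}^\nu;p_{\mathbf{Y}}(\mathbf{y})\,d\mathbf{y})$. Then: (i) $f$ is continuous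 on $\mathbb{R}^\nu$ and belongs to $\mathbb{H}$, i.e. $E\{f(\mathbf{Y})^2\}=\|f\|_{\mathbb{H}}^2<+\infty$; (ii) $\mathbf{g}$ is a continuous $\mathbb{R}^\nu$-valued function on $\mathbb{R}^\nu$, each $g_j$ ($j=1,\ldots,\nu$) belongs to $\mathbb{H}$, $\hat g$ belongs to $\mathbb{H}$, and $E\{\hat g(\mathbf{Y})^4\}<+\infty$; (iii) $h$ is a continuous real-valued function on $\mathbb{R}^\nu$ and belongs to $\mathbb{H}$, i.e. $E\{|h(\mathbf{Y})|^2\}=\|h\|_{\mathbb{H}}^2<+\infty$.
   Context: $\mathbb{H}=L^2(\mathbb{R}^\nu;p_{\mathbf{Y}}(\mathbf{y})\,d\mathbf{y})$ is the Hilbert space of real functions on $\mathbb{R}^\nu$ square integrable with respect to the standard Gaussian measure, with inner product $\langle u,v\rangle_{\mathbb{H}}=\int_{\mathbb{R}^\nu}u(\mathbf{y})v(\mathbf{y})p_{\mathbf{Y}}(\mathbf{y})\,d\mathbf{y}=E\{u(\mathbf{Y})v(\mathbf{Y})\}$. The function $p_{\mathbf{H}}$ is the (modified) Gaussian kernel density estimate built from the training points $\boldsymbol{\eta}^j$. *)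

theory Defs
  imports "HOL-Analysis.Analysis"
begin

text \<open>Dimension nu = CARD('n); vectors in R^nu are real^'n.\<close>

definition kde_s :: "nat \<Rightarrow> nat \<Rightarrow> real" where
  "kde_s nu nd = (4 / (real nd * (2 + real nu))) powr (1 / (real nu + 4))"

definition kde_shat :: "nat \<Rightarrow> nat \<Rightarrow> real" where
  "kde_shat nu nd = kde_s nu nd / sqrt ((kde_s nu nd)\<^sup>2 + (real nd - 1) / real nd)"

definition pH :: "nat \<Rightarrow> (nat \<Rightarrow> real^'n) \<Rightarrow> real^'n \<Rightarrow> real" where
  "pH nd eta y =
     (let nu = CARD('n); s = kde_s nu nd; sh = kde_shat nu nd in
      (1 / real nd) * (\<Sum>j\<in>{1..nd}.
         1 / (sqrt (2 * pi) * sh) ^ nu *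
         exp (- (1 / (2 * sh\<^sup>2)) * (norm (y - (sh / s) *\<^sub>R eta j))\<^sup>2)))"

definition std_gauss_pdf :: "real^'n \<Rightarrow> real" where
  "std_gauss_pdf y = (2 * pi) powr (- real CARD('n) / 2) * exp (- (norm y)\<^sup>2 / 2)"

definition std_gauss :: "(real^'n) measure" where
  "std_gauss = density lborel (\<lambda>y. ennreal (std_gauss_pdf y))"

definition in_H :: "(real^'n \<Rightarrow> real) \<Rightarrow> bool" where
  "in_H u \<longleftrightarrow> u \<in> borel_measurable std_gauss \<and> integrable std_gauss (\<lambda>y. (u y)\<^sup>2)"

end

theory Submission
  imports Defs "HOL-Probability.Probability"
begin

lemma gauss1: "integrable lborel (\<lambda>x::real. exp (- x\<^sup>2 / 4))"
proof -
  have "integrable lborel (\<lambda>x. sqrt (4*pi) * normal_density 0 (sqrt 2) x)"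
    by simp
  moreover have "(\<lambda>x. sqrt (4*pi) * normal_density 0 (sqrt 2) x) = (\<lambda>x::real. exp (- x\<^sup>2 / 4))"
    by (auto simp: normal_density_def fun_eq_iff real_sqrt_mult)
  ultimately show ?thesis by simp
qed

lemma gaussn: "integrable lborel (\<lambda>x::'a::euclidean_space. exp (- (norm x)\<^sup>2 / 4))"
proof -
  have eq: "exp (- (norm x)\<^sup>2 / 4) = (\<Prod>b\<in>Basis. exp (- (x \<bullet> b)\<^sup>2 / 4))" for x :: 'a
  proof -
    have "(norm x)\<^sup>2 = (\<Sum>b\<in>Basis. (x \<bullet> b)\<^sup>2)"
    proof -
      have "(norm x)\<^sup>2 = x \<bullet> x" by (simp add: power2_norm_eq_inner)
      also have "\<dots> = (\<Sum>b\<in>Basis. (x \<bullet> b)\<^sup>2)"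
        by (subst euclidean_inner) (simp add: power2_eq_square)
      finally show ?thesis .
    qed
    then have "- (norm x)\<^sup>2 / 4 = (\<Sum>b\<in>Basis. - (x \<bullet> b)\<^sup>2 / 4)"
      by (simp add: sum_divide_distrib sum_negf)
    then show ?thesis by (simp add: exp_sum)
  qed
  have fin: "(\<integral>\<^sup>+x. ennreal (exp (- x\<^sup>2 / 4)) \<partial>lborel) < \<infinity>"
    using gauss1 by (simp add: integrable_iff_bounded)
  have "(\<integral>\<^sup>+x. ennreal (exp (- (norm x)\<^sup>2 / 4)) \<partial>(lborel::'a measure))
      = (\<integral>\<^sup>+x. (\<Prod>b\<in>Basis. ennreal (exp (- (x \<bullet> b)\<^sup>2 / 4))) \<partial>(lborel::'a measure))"
  proof (rule nn_integral_cong)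
    fix x :: 'a
    have "ennreal (exp (- (norm x)\<^sup>2 / 4)) = ennreal (\<Prod>b\<in>Basis. exp (- (x \<bullet> b)\<^sup>2 / 4))"
      by (simp only: eq)
    also have "\<dots> = (\<Prod>b\<in>Basis. ennreal (exp (- (x \<bullet> b)\<^sup>2 / 4)))"
      by (rule prod_ennreal[symmetric]) simp
    finally show "ennreal (exp (- (norm x)\<^sup>2 / 4)) = (\<Prod>b\<in>Basis. ennreal (exp (- (x \<bullet> b)\<^sup>2 / 4)))" .
  qed
  also have "\<dots> = (\<Prod>b\<in>(Basis::'a set). (\<integral>\<^sup>+x. ennreal (exp (- x\<^sup>2 / 4)) \<partial>lborel))"
    by (subst nn_integral_lborel_prod) auto
  also have "\<dots> < \<infinity>"
    using fin by (simp add: less_top[symmetric] ennreal_prod_eq_top power_eq_top_ennreal)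
  finally show ?thesis
    by (intro integrableI_bounded) auto
qed

lemma poly_exp: "(1 + u)^4 \<le> 16^4 * exp (u/4)" if "u \<ge> 0" for u :: real
proof -
  have h1: "(1 + (u/4) / real 4)^4 \<le> exp (u/4)"
    by (rule exp_ge_one_plus_x_over_n_power_n) (use that in auto)
  have "(1+u)^4 \<le> (16 * (1 + (u/4)/real 4))^4"
    by (rule power_mono) (use that in auto)
  also have "\<dots> = 16^4 * (1 + (u/4)/real 4)^4"
    by (simp only: power_mult_distrib)
  also have "\<dots> \<le> 16^4 * exp (u/4)"
    by (rule mult_left_mono[OF h1]) simp
  finally show ?thesis .
qed

lemma integrable_std_gauss_bound:
  fixes F :: "real^'n \<Rightarrow> real"
  assumes cont: "continuous_on UNIV F" and bnd: "\<And>y. \<bar>F y\<bar> \<le> C * (1 + (norm y)\<^sup>2)^4"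
  shows "integrable std_gauss F"
proof -
  have Fm[measurable]: "F \<in> borel_measurable borel"
    using cont by (intro borel_measurable_continuous_onI)
  have pm[measurable]: "std_gauss_pdf \<in> borel_measurable (borel :: (real^'n) measure)"
    unfolding std_gauss_pdf_def by measurable
  define K where "K = (2 * pi) powr (- real CARD('n) / 2)"
  have K: "K > 0" by (simp add: K_def)
  have i1: "integrable lborel (\<lambda>y::real^'n. (K * C * 16^4) * exp (- (norm y)\<^sup>2 / 4))"
    by (intro integrable_mult_right gaussn)
  have i3: "\<bar>std_gauss_pdf y * F y\<bar> \<le> \<bar>(K * C * 16^4) * exp (- (norm y)\<^sup>2 / 4)\<bar>" for y :: "real^'n"
  proof -
    let ?u = "(norm y)\<^sup>2"
    have C: "C \<ge> 0" using bnd[of 0] by simp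
    have "\<bar>std_gauss_pdf y * F y\<bar> = K * exp (- ?u / 2) * \<bar>F y\<bar>"
      by (simp add: std_gauss_pdf_def K_def abs_mult)
    also have "\<dots> \<le> K * exp (- ?u / 2) * (C * (16^4 * exp (?u/4)))"
    proof -
      have "C * (1 + ?u)^4 \<le> C * (16^4 * exp (?u/4))"
        by (rule mult_left_mono[OF poly_exp C]) simp
      then have b1: "\<bar>F y\<bar> \<le> C * (16^4 * exp (?u/4))" using bnd[of y] by linarith
      have "0 \<le> K * exp (- ?u / 2)" using K by simp
      then show ?thesis by (rule mult_left_mono[OF b1])
    qed
    also have "\<dots> = (K * C * 16^4) * (exp (- ?u / 2) * exp (?u/4))" by simp
    also have "exp (- ?u / 2) * exp (?u/4) = exp (- ?u / 4)"
      by (simp add: exp_add[symmetric])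
    finally show ?thesis using K C by simp
  qed
  have i2: "(\<lambda>y::real^'n. std_gauss_pdf y * F y) \<in> borel_measurable lborel" by measurable
  have "integrable lborel (\<lambda>y::real^'n. std_gauss_pdf y * F y)"
    by (rule Bochner_Integration.integrable_bound[OF i1 i2]) (use i3 in \<open>simp add: real_norm_def\<close>)
  moreover have "std_gauss_pdf y \<ge> 0" for y :: "real^'n" by (simp add: std_gauss_pdf_def)
  ultimately show ?thesis
    unfolding std_gauss_def by (subst integrable_density) auto
qed

lemma in_H_bound:
  fixes F :: "real^'n \<Rightarrow> real"
  assumes cont: "continuous_on UNIV F" and bnd: "\<And>y. (F y)\<^sup>2 \<le> C * (1 + (norm y)\<^sup>2)^4"
  shows "in_H F"
  unfolding in_H_def
proof
  show "F \<in> borel_measurable std_gauss"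
    using cont unfolding std_gauss_def
    by (simp add: borel_measurable_continuous_onI)
  show "integrable std_gauss (\<lambda>y. (F y)\<^sup>2)"
    by (rule integrable_std_gauss_bound[where C=C]) (use bnd in \<open>auto intro!: continuous_intros cont\<close>)
qed


lemma sq_bound: "\<bar>x\<bar> \<le> D * (1 + u) \<Longrightarrow> 0 \<le> u \<Longrightarrow> x\<^sup>2 \<le> D\<^sup>2 * (1 + u)^4" for x D u :: real
proof -
  assume a: "\<bar>x\<bar> \<le> D * (1 + u)" and u: "0 \<le> u"
  have "x\<^sup>2 = \<bar>x\<bar>\<^sup>2" by simp
  also have "\<dots> \<le> (D * (1 + u))\<^sup>2" using a by (intro power_mono) auto
  also have "\<dots> = D\<^sup>2 * (1+u)^2" by (simp add: power_mult_distrib)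
  also have "\<dots> \<le> D\<^sup>2 * (1+u)^4" using u by (intro mult_left_mono power_increasing) auto
  finally show ?thesis .
qed

lemma norm_le_1u: "norm (y::'a::real_normed_vector) \<le> 1 + (norm y)\<^sup>2"
proof -
  have "0 \<le> (norm y - 1/2)\<^sup>2" by simp
  then show ?thesis by (simp add: power2_eq_square algebra_simps) 
qed

lemma wsum_bound:
  fixes x :: "'b \<Rightarrow> 'a::real_normed_vector"
  assumes "\<And>j. j \<in> J \<Longrightarrow> w j \<ge> 0" "\<And>j. j \<in> J \<Longrightarrow> norm (x j) \<le> M"
  shows "norm (\<Sum>j\<in>J. w j *\<^sub>R x j) \<le> M * (\<Sum>j\<in>J. w j)"
proof -
  have "norm (\<Sum>j\<in>J. w j *\<^sub>R x j) \<le> (\<Sum>j\<in>J. norm (w j *\<^sub>R x j))" by (rule norm_sum)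
  also have "\<dots> \<le> (\<Sum>j\<in>J. w j * M)"
    using assms by (intro sum_mono) (auto intro: mult_left_mono)
  also have "\<dots> = M * (\<Sum>j\<in>J. w j)" by (simp add: sum_distrib_left mult.commute)
  finally show ?thesis .
qed

theorem proposition1:
  fixes nd :: nat and eta :: "nat \<Rightarrow> real^'n"
  assumes "nd > 1"
    and "(1 / real nd) *\<^sub>R (\<Sum>j\<in>{1..nd}. eta j) = 0"
    and "\<forall>i k. (1 / (real nd - 1)) * (\<Sum>j\<in>{1..nd}. eta j $ i * eta j $ k)
                 = (if i = k then 1 else 0)"
  defines "f \<equiv> \<lambda>y. ln (pH nd eta y)"
  shows "continuous_on UNIV f \<and> in_H f \<and>
    (\<exists>g Hf. (\<forall>y. (f has_derivative (\<lambda>v. g y \<bullet> v)) (at y)) \<and>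
           (\<forall>y. (g has_derivative Hf y) (at y)) \<and>
           continuous_on UNIV g \<and>
           (\<forall>i. in_H (\<lambda>y. g y $ i)) \<and>
           in_H (\<lambda>y. norm (g y)) \<and>
           integrable std_gauss (\<lambda>y. (norm (g y)) ^ 4) \<and>
           continuous_on UNIV (\<lambda>y. \<Sum>i\<in>UNIV. Hf y (axis i 1) $ i) \<and>
           in_H (\<lambda>y. \<Sum>i\<in>UNIV. Hf y (axis i 1) $ i))"
proof -
  define s where "s = kde_s CARD('n) nd"
  define sh where "sh = kde_shat CARD('n) nd"
  have nd: "real nd > 1" using assms(1) by simp
  have s: "s > 0" unfolding s_def kde_s_def using nd by simp
  have sh: "sh > 0" unfolding sh_def kde_shat_def s_def[symmetric] using s nd
    by (intro divide_pos_pos real_sqrt_gt_zero add_pos_nonneg) auto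
  define \<alpha> where "\<alpha> = 1 / (2 * sh\<^sup>2)"
  have \<alpha>: "\<alpha> > 0" unfolding \<alpha>_def using sh by simp
  define a where "a = (\<lambda>j. (sh / s) *\<^sub>R eta j)"
  have aj: "(sh / s) *\<^sub>R eta j = a j" for j unfolding a_def by simp
  define K where "K = 1 / (sqrt (2 * pi) * sh) ^ CARD('n)"
  have K: "K > 0" unfolding K_def using sh by simp
  define J where "J = {1..nd}"
  have J: "finite J" "J \<noteq> {}" "1 \<in> J" unfolding J_def using assms(1) by auto
  define e where "e = (\<lambda>j (y::real^'n). exp (2*\<alpha>*(y \<bullet> a j) - \<alpha>*(norm (a j))\<^sup>2))"
  define E where "E = (\<lambda>y. \<Sum>j\<in>J. e j y)"
  have epos: "e j y > 0" for j y unfolding e_def by simp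
  have Epos: "E y > 0" for y unfolding E_def using J epos by (intro sum_pos) auto
  define E' where "E' = (\<lambda>y (v::real^'n). \<Sum>j\<in>J. e j y * (2*\<alpha>*(v \<bullet> a j)))"
  define G where "G = (\<lambda>y. \<Sum>j\<in>J. e j y *\<^sub>R a j)"
  define G' where "G' = (\<lambda>y (v::real^'n). \<Sum>j\<in>J. (e j y * (2*\<alpha>*(v \<bullet> a j))) *\<^sub>R a j)"
  define g where "g = (\<lambda>y. (2*\<alpha>) *\<^sub>R ((1 / E y) *\<^sub>R G y - y))"
  define Hf where "Hf = (\<lambda>y v. (2*\<alpha>) *\<^sub>R ((1 / E y) *\<^sub>R G' y v + (- E' y v / (E y)\<^sup>2) *\<^sub>R G y - v))"
  define R where "R = (\<Sum>j\<in>J. norm (a j))"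
  have aR: "norm (a j) \<le> R" if "j \<in> J" for j
    unfolding R_def using J that by (intro member_le_sum) auto
  have R: "R \<ge> 0" unfolding R_def by (simp add: sum_nonneg)
  have fF: "f y = ln (K / real nd) - \<alpha> * (norm y)\<^sup>2 + ln (E y)" for y
  proof -
    have sq: "(norm (y - a j))\<^sup>2 = (norm y)\<^sup>2 - 2 * (y \<bullet> a j) + (norm (a j))\<^sup>2" for j
      by (simp add: power2_norm_eq_inner inner_diff_left inner_diff_right inner_commute)
    have ex: "exp (- (1 / (2 * sh\<^sup>2)) * (norm (y - (sh / s) *\<^sub>R eta j))\<^sup>2)
        = exp (- \<alpha> * (norm y)\<^sup>2) * e j y" for j
      unfolding aj \<alpha>_def[symmetric] sq e_def exp_add[symmetric]
      by (simp add: algebra_simps)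
    have "pH nd eta y = (1 / real nd) * (\<Sum>j\<in>J. K * (exp (- \<alpha> * (norm y)\<^sup>2) * e j y))"
      unfolding pH_def Let_def s_def[symmetric] sh_def[symmetric] K_def[symmetric] J_def[symmetric] ex
      by simp
    also have "\<dots> = (K / real nd) * exp (- \<alpha> * (norm y)\<^sup>2) * E y"
      unfolding E_def by (simp add: sum_distrib_left sum_divide_distrib mult.assoc)
    finally have "f y = ln ((K / real nd) * exp (- \<alpha> * (norm y)\<^sup>2) * E y)"
      unfolding f_def by simp
    also have "\<dots> = ln (K / real nd) + ln (exp (- \<alpha> * (norm y)\<^sup>2)) + ln (E y)"
    proof -
      have p1: "K / real nd > 0" using K nd by simp
      have "ln (K / real nd * exp (- \<alpha> * (norm y)\<^sup>2) * E y) = ln (K / real nd * exp (- \<alpha> * (norm y)\<^sup>2)) + ln (E y)"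
        by (rule ln_mult_pos) (use p1 Epos[of y] in \<open>simp_all only: mult_pos_pos exp_gt_zero\<close>)
      also have "ln (K / real nd * exp (- \<alpha> * (norm y)\<^sup>2)) = ln (K / real nd) + ln (exp (- \<alpha> * (norm y)\<^sup>2))"
        by (rule ln_mult_pos) (use p1 in auto)
      finally show ?thesis .
    qed
    finally show ?thesis by simp
  qed
  have fF': "f = (\<lambda>y. ln (K / real nd) - \<alpha> * (y \<bullet> y) + ln (E y))"
    using fF by (simp add: fun_eq_iff power2_norm_eq_inner)
  have de: "(e j has_derivative (\<lambda>v. e j y * (2*\<alpha>*(v \<bullet> a j)))) (at y)" for j y
    unfolding e_def
    by (auto intro!: derivative_eq_intros simp: fun_eq_iff)
  have dE: "(E has_derivative E' y) (at y)" for y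
    unfolding E_def E'_def by (intro has_derivative_sum de)
  have dG: "(G has_derivative G' y) (at y)" for y
    unfolding G_def G'_def by (intro has_derivative_sum has_derivative_scaleR_left de)
  have df: "(f has_derivative (\<lambda>v. g y \<bullet> v)) (at y)" for y
  proof -
    have "(f has_derivative (\<lambda>v. 0 - \<alpha> * (y \<bullet> v + v \<bullet> y) + E' y v * inverse (E y))) (at y)"
      unfolding fF'
      by (intro has_derivative_add has_derivative_diff has_derivative_const has_derivative_mult_right
          has_derivative_inner has_derivative_ident DERIV_compose_FDERIV[OF DERIV_ln] Epos dE)
    moreover have "(\<lambda>v. 0 - \<alpha> * (y \<bullet> v + v \<bullet> y) + E' y v * inverse (E y)) = (\<lambda>v. g y \<bullet> v)"
    proof
      fix v
      define S where "S = (\<Sum>j\<in>J. e j y * (v \<bullet> a j))"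
      have "G y \<bullet> v = S" unfolding S_def G_def inner_sum_left
        by (rule sum.cong) (simp_all add: inner_commute)
      moreover have "E' y v = 2*\<alpha> * S" unfolding S_def E'_def by (simp add: sum_distrib_left mult.assoc mult.left_commute)
      ultimately show "0 - \<alpha> * (y \<bullet> v + v \<bullet> y) + E' y v * inverse (E y) = g y \<bullet> v"
        unfolding g_def by (simp add: inner_diff_left inner_commute algebra_simps divide_inverse)
    qed
    ultimately show ?thesis by simp
  qed
  have dinv: "((\<lambda>y. 1 / E y) has_derivative (\<lambda>v. - E' y v / (E y)\<^sup>2)) (at y)" for y
  proof -
    have "((\<lambda>y. 1 / E y) has_derivative (\<lambda>h. - 1 * (inverse (E y) * E' y h * inverse (E y)) + 0 / E y)) (at y)"
      by (rule has_derivative_divide[OF has_derivative_const dE]) (use Epos[of y] in auto)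
    moreover have "(\<lambda>h. - 1 * (inverse (E y) * E' y h * inverse (E y)) + 0 / E y) = (\<lambda>v. - E' y v / (E y)\<^sup>2)"
      by (simp add: fun_eq_iff power2_eq_square divide_inverse)
    ultimately show ?thesis by simp
  qed
  have dg: "(g has_derivative Hf y) (at y)" for y
    unfolding g_def Hf_def
    by (intro has_derivative_scaleR_right has_derivative_diff has_derivative_scaleR[OF dinv dG] has_derivative_ident)
  have cf: "continuous_on UNIV f" by (rule has_derivative_continuous_on) (use df in auto)
  have cg: "continuous_on UNIV g" by (rule has_derivative_continuous_on) (use dg in auto)
  have ce: "continuous_on UNIV (e j)" for j by (rule has_derivative_continuous_on) (use de in auto)
  have cE: "continuous_on UNIV E" by (rule has_derivative_continuous_on) (use dE in auto)
  have cG: "continuous_on UNIV G" by (rule has_derivative_continuous_on) (use dG in auto)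
  have cE': "continuous_on UNIV (\<lambda>y. E' y v)" for v
    unfolding E'_def by (intro continuous_intros ce)
  have cG': "continuous_on UNIV (\<lambda>y. G' y v)" for v
    unfolding G'_def by (intro continuous_intros ce)
  have cH: "continuous_on UNIV (\<lambda>y. Hf y v)" for v
    unfolding Hf_def using Epos
    by (intro continuous_intros cE cG cE' cG') (auto simp: less_imp_neq[symmetric])
  have ch: "continuous_on UNIV (\<lambda>y. \<Sum>i\<in>UNIV. Hf y (axis i 1) $ i)"
    by (intro continuous_intros cH)
  have nG: "norm (G y) \<le> R * E y" for y
    unfolding G_def E_def by (rule wsum_bound) (use epos aR in \<open>auto intro: less_imp_le\<close>)
  have nE': "\<bar>E' y v\<bar> \<le> (2*\<alpha>*R*norm v) * E y" for y v
  proof -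
    have "E' y v = (\<Sum>j\<in>J. e j y *\<^sub>R (2*\<alpha>*(v \<bullet> a j)))" unfolding E'_def by simp
    also have "norm \<dots> \<le> (2*\<alpha>*R*norm v) * E y" unfolding E_def
    proof (rule wsum_bound)
      fix j assume j: "j \<in> J"
      have "\<bar>v \<bullet> a j\<bar> \<le> norm v * R"
        using Cauchy_Schwarz_ineq2[of v "a j"] aR[OF j] by (meson mult_left_mono norm_ge_zero order_trans)
      then show "norm (2*\<alpha>*(v \<bullet> a j)) \<le> 2*\<alpha>*R*norm v"
        using \<alpha> by (simp add: abs_mult mult_left_mono mult.commute mult.left_commute)
    qed (use epos in \<open>auto intro: less_imp_le\<close>)
    finally show ?thesis by simp
  qed
  have nG': "norm (G' y v) \<le> (2*\<alpha>*R*R*norm v) * E y" for y v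
  proof -
    have "G' y v = (\<Sum>j\<in>J. e j y *\<^sub>R ((2*\<alpha>*(v \<bullet> a j)) *\<^sub>R a j))" unfolding G'_def by simp
    also have "norm \<dots> \<le> (2*\<alpha>*R*R*norm v) * E y" unfolding E_def
    proof (rule wsum_bound)
      fix j assume j: "j \<in> J"
      have "\<bar>v \<bullet> a j\<bar> \<le> norm v * R"
        using Cauchy_Schwarz_ineq2[of v "a j"] aR[OF j] by (meson mult_left_mono norm_ge_zero order_trans)
      then have "\<bar>v \<bullet> a j\<bar> * norm (a j) \<le> (norm v * R) * R"
        using aR[OF j] R by (intro mult_mono) auto
      then show "norm ((2*\<alpha>*(v \<bullet> a j)) *\<^sub>R a j) \<le> 2*\<alpha>*R*R*norm v"
        using \<alpha> by (simp add: abs_mult mult_left_mono mult.commute mult.left_commute)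
    qed (use epos in \<open>auto intro: less_imp_le\<close>)
    finally show ?thesis by simp
  qed
  have ng: "norm (g y) \<le> 2*\<alpha>*(R + norm y)" for y
  proof -
    have "norm ((1 / E y) *\<^sub>R G y) \<le> R"
      using nG[of y] Epos[of y] by (simp add: divide_le_eq mult.commute)
    then have "norm ((1 / E y) *\<^sub>R G y - y) \<le> R + norm y"
      by (meson add_mono norm_triangle_ineq4 order_trans order_refl)
    then show ?thesis unfolding g_def using \<alpha> by simp
  qed
  define B where "B = 2*\<alpha>*(2*\<alpha>*R*R + 2*\<alpha>*R*R + 1)"
  have nH: "norm (Hf y (axis i 1)) \<le> B" for y i
  proof -
    let ?v = "axis i (1::real) :: real^'n"
    have t1: "norm ((1 / E y) *\<^sub>R G' y ?v) \<le> 2*\<alpha>*R*R"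
      using nG'[of y ?v] Epos[of y] by (simp add: divide_le_eq mult.commute)
    have "norm ((- E' y ?v / (E y)\<^sup>2) *\<^sub>R G y) = (\<bar>E' y ?v\<bar> / E y) * (norm (G y) / E y)"
      by (simp add: power2_eq_square abs_mult)
    also have "\<dots> \<le> (2*\<alpha>*R) * R"
      using nE'[of y ?v] nG[of y] Epos[of y] \<alpha> R
      by (intro mult_mono) (auto simp: divide_le_eq mult.commute)
    finally have t2: "norm ((- E' y ?v / (E y)\<^sup>2) *\<^sub>R G y) \<le> 2*\<alpha>*R*R" by simp
    have "norm ((1 / E y) *\<^sub>R G' y ?v + (- E' y ?v / (E y)\<^sup>2) *\<^sub>R G y - ?v) \<le> 2*\<alpha>*R*R + 2*\<alpha>*R*R + 1"
      using t1 t2 norm_triangle_ineq4[of "(1 / E y) *\<^sub>R G' y ?v + (- E' y ?v / (E y)\<^sup>2) *\<^sub>R G y" ?v]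
        norm_triangle_ineq[of "(1 / E y) *\<^sub>R G' y ?v" "(- E' y ?v / (E y)\<^sup>2) *\<^sub>R G y"]
        norm_axis_1[of i]
      by linarith
    then show ?thesis unfolding Hf_def B_def using \<alpha> by simp
  qed
  have nh: "\<bar>\<Sum>i\<in>UNIV. Hf y (axis i 1) $ i\<bar> \<le> real CARD('n) * B" for y
  proof -
    have "\<bar>\<Sum>i\<in>UNIV. Hf y (axis i 1) $ i\<bar> \<le> (\<Sum>i\<in>UNIV. \<bar>Hf y (axis i 1) $ i\<bar>)" by (rule sum_abs)
    also have "\<dots> \<le> (\<Sum>i\<in>(UNIV::'n set). B)"
      by (intro sum_mono order_trans[OF component_le_norm_cart nH])
    finally show ?thesis by simp
  qed
  have cardJ: "card J = nd" unfolding J_def by simp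
  have aybound: "\<bar>y \<bullet> a j\<bar> \<le> norm y * R" if "j \<in> J" for y j
    using Cauchy_Schwarz_ineq2[of y "a j"] aR[OF that] by (meson mult_left_mono norm_ge_zero order_trans)
  have lnE: "\<bar>ln (E y)\<bar> \<le> ln (real nd) + 2*\<alpha>*R*norm y + \<alpha>*R\<^sup>2" for y
  proof -
    have "e j y \<le> exp (2*\<alpha>*R*norm y)" if j: "j \<in> J" for j
    proof -
      have "2*\<alpha>*(y \<bullet> a j) \<le> 2*\<alpha>*(norm y * R)"
        using aybound[OF j, of y] \<alpha> by (intro mult_left_mono) auto
      moreover have "0 \<le> \<alpha>*(norm (a j))\<^sup>2" using \<alpha> by simp
      ultimately show ?thesis unfolding e_def by (simp add: mult.commute mult.left_commute)
    qed
    then have "E y \<le> (\<Sum>j\<in>J. exp (2*\<alpha>*R*norm y))" unfolding E_def by (intro sum_mono) auto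
    also have "\<dots> = real nd * exp (2*\<alpha>*R*norm y)" using cardJ by simp
    finally have up: "E y \<le> real nd * exp (2*\<alpha>*R*norm y)" .
    have "ln (E y) \<le> ln (real nd * exp (2*\<alpha>*R*norm y))"
      using up Epos[of y] by (subst ln_le_cancel_iff) auto
    also have "\<dots> = ln (real nd) + 2*\<alpha>*R*norm y"
      using nd by (subst ln_mult_pos) auto
    finally have lu: "ln (E y) \<le> ln (real nd) + 2*\<alpha>*R*norm y" .
    have "-(norm y * R) \<le> y \<bullet> a 1"
      using aybound[OF J(3), of y] by (simp add: abs_le_iff)
    then have "2*\<alpha>*(-(norm y * R)) \<le> 2*\<alpha>*(y \<bullet> a 1)"
      using \<alpha> by (intro mult_left_mono) auto
    then have "-(2*\<alpha>*(norm y * R)) \<le> 2*\<alpha>*(y \<bullet> a 1)" by simp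
    moreover have "\<alpha>*(norm (a 1))\<^sup>2 \<le> \<alpha>*R\<^sup>2"
      using aR[OF J(3)] \<alpha> by (intro mult_left_mono power_mono) auto
    ultimately have "exp (- 2*\<alpha>*R*norm y - \<alpha>*R\<^sup>2) \<le> e 1 y"
      unfolding e_def by (simp add: mult.commute mult.left_commute)
    also have "e 1 y \<le> E y"
      unfolding E_def using J epos by (intro member_le_sum) (auto intro: less_imp_le)
    finally have lo0: "exp (- 2*\<alpha>*R*norm y - \<alpha>*R\<^sup>2) \<le> E y" .
    have "- 2*\<alpha>*R*norm y - \<alpha>*R\<^sup>2 = ln (exp (- 2*\<alpha>*R*norm y - \<alpha>*R\<^sup>2))" by simp
    also have "\<dots> \<le> ln (E y)" using lo0 Epos[of y] by (subst ln_le_cancel_iff) auto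
    finally have lo: "- 2*\<alpha>*R*norm y - \<alpha>*R\<^sup>2 \<le> ln (E y)" .
    have "0 \<le> ln (real nd)" using nd by simp
    moreover have "0 \<le> \<alpha>*R\<^sup>2" "0 \<le> 2*\<alpha>*R*norm y" using \<alpha> R by auto
    ultimately show ?thesis using lu lo by linarith
  qed
  define D where "D = \<bar>ln (K / real nd)\<bar> + ln (real nd) + \<alpha>*R\<^sup>2 + 2*\<alpha>*R + \<alpha>"
  have nf: "\<bar>f y\<bar> \<le> D * (1 + (norm y)\<^sup>2)" for y
  proof -
    define u where "u = (norm y)\<^sup>2"
    have u: "0 \<le> u" unfolding u_def by simp
    have t: "norm y \<le> 1 + u" unfolding u_def by (rule norm_le_1u)
    define c0 where "c0 = \<bar>ln (K / real nd)\<bar> + ln (real nd) + \<alpha>*R\<^sup>2"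
    have c0: "0 \<le> c0" unfolding c0_def using nd \<alpha> by simp
    have f1: "\<bar>f y\<bar> \<le> c0 + 2*\<alpha>*R*norm y + \<alpha>*u"
    proof -
      have au: "0 \<le> \<alpha>*(norm y)\<^sup>2" using \<alpha> by simp
      show ?thesis
        using fF[of y] abs_le_D1[OF lnE[of y]] abs_le_D2[OF lnE[of y]] abs_ge_self[of "ln (K / real nd)"]
          abs_ge_minus_self[of "ln (K / real nd)"] au
        unfolding c0_def u_def abs_le_iff by linarith
    qed
    have f2: "2*\<alpha>*R*norm y \<le> 2*\<alpha>*R*(1+u)" using t \<alpha> R by (intro mult_left_mono) auto
    have f3: "c0 \<le> c0*(1+u)" using c0 u by (simp add: algebra_simps)
    have f4: "\<alpha>*u \<le> \<alpha>*(1+u)" using \<alpha> by simp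
    have "D * (1 + u) = c0*(1+u) + 2*\<alpha>*R*(1+u) + \<alpha>*(1+u)"
      unfolding D_def c0_def by (simp add: algebra_simps)
    then show ?thesis using f1 f2 f3 f4 unfolding u_def[symmetric] by linarith
  qed
  define Dg where "Dg = 2*\<alpha>*(R+1)"
  have ng2: "norm (g y) \<le> Dg * (1 + (norm y)\<^sup>2)" for y
  proof -
    have t: "norm y \<le> 1 + (norm y)\<^sup>2" by (rule norm_le_1u)
    have "R \<le> R * (1 + (norm y)\<^sup>2)" using R by (simp add: algebra_simps)
    then have "R + norm y \<le> (R+1) * (1 + (norm y)\<^sup>2)" using t by (simp add: algebra_simps)
    then have "2*\<alpha>*(R + norm y) \<le> 2*\<alpha>*((R+1) * (1 + (norm y)\<^sup>2))" using \<alpha> by (intro mult_left_mono) auto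
    then show ?thesis using ng[of y] unfolding Dg_def by (simp add: mult.assoc)
  qed
  have Dg: "Dg \<ge> 0" unfolding Dg_def using \<alpha> R by simp
  have r1: "in_H f"
    by (rule in_H_bound[OF cf, where C="D\<^sup>2"]) (rule sq_bound[OF nf], simp)
  have r2: "in_H (\<lambda>y. g y $ i)" for i
  proof (rule in_H_bound[where C="Dg\<^sup>2"])
    show "continuous_on UNIV (\<lambda>y. g y $ i)" by (intro continuous_intros cg)
    fix y
    show "(g y $ i)\<^sup>2 \<le> Dg\<^sup>2 * (1 + (norm y)\<^sup>2) ^ 4"
      by (rule sq_bound) (use component_le_norm_cart[of "g y" i] ng2[of y] in auto)
  qed
  have r3: "in_H (\<lambda>y. norm (g y))"
  proof (rule in_H_bound[where C="Dg\<^sup>2"])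
    show "continuous_on UNIV (\<lambda>y. norm (g y))" by (intro continuous_intros cg)
    fix y
    show "(norm (g y))\<^sup>2 \<le> Dg\<^sup>2 * (1 + (norm y)\<^sup>2) ^ 4"
      by (rule sq_bound) (use ng2[of y] in auto)
  qed
  have r4: "integrable std_gauss (\<lambda>y. (norm (g y)) ^ 4)"
  proof (rule integrable_std_gauss_bound[where C="Dg^4"])
    show "continuous_on UNIV (\<lambda>y. (norm (g y)) ^ 4)" by (intro continuous_intros cg)
    fix y
    have "(norm (g y)) ^ 4 \<le> (Dg * (1 + (norm y)\<^sup>2)) ^ 4"
      by (rule power_mono[OF ng2]) simp
    then show "\<bar>(norm (g y)) ^ 4\<bar> \<le> Dg^4 * (1 + (norm y)\<^sup>2) ^ 4"
      by (simp add: power_mult_distrib)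
  qed
  have B: "B \<ge> 0" unfolding B_def using \<alpha> R by simp
  have r5: "in_H (\<lambda>y. \<Sum>i\<in>UNIV. Hf y (axis i 1) $ i)"
  proof (rule in_H_bound[OF ch, where C="(real CARD('n) * B)\<^sup>2"])
    fix y
    have "\<bar>\<Sum>i\<in>UNIV. Hf y (axis i 1) $ i\<bar> \<le> (real CARD('n) * B) * (1 + (norm y)\<^sup>2)"
    proof -
      have cb: "0 \<le> real CARD('n) * B" using B by simp
      have "real CARD('n) * B * 1 \<le> (real CARD('n) * B) * (1 + (norm y)\<^sup>2)"
        by (rule mult_left_mono[OF _ cb]) simp
      then show ?thesis using nh[of y] by (simp only: mult_1_right)
    qed
    then show "(\<Sum>i\<in>UNIV. Hf y (axis i 1) $ i)\<^sup>2 \<le> (real CARD('n) * B)\<^sup>2 * (1 + (norm y)\<^sup>2) ^ 4"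
      by (rule sq_bound) simp
  qed
  show ?thesis
    by (intro conjI cf r1 exI[where x=g] exI[where x=Hf] allI df dg cg r2 r3 r4 ch r5)
qed

end
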